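(* There exists $T_0>0$ depending only on $\lambda$ and $\alpha$ such that for any solution $s(t)$ of $\dot s_1=s_1\psi(s_1^2+s_2^2)\log\lambda$, $\dot s_2=-s_2\psi(s_1^2+s_2^2)\log\lambda$ with $s(0)\in D_{r_0}$, every time interval during which $s(t)$ stays in $D_{r_0}\setminus D_{r_0/2}$ has length less than $T_0$.
   Context: Here $\lambda>1$ is the largest eigenvalue of $A=\begin{pmatrix}2&1\\1&1\end{pmatrix}$, $0<\alpha<1$, $0<r_0<1$, $D_r=\{(s_1,s_2):s_1^2+s_2^2\le r\}$, and $\psi:[0,1]\to[0,1]$ is $C^\infty$ except at $0$, with $\psi(u)=1$ for $u\ge r_0$, $\psi'>0$ and decreasing on $(0,r_0)$, and $\psi(u)=(u/r_0)^\alpha$ for $0\le u\le r_0/2$. *)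

theory Defs
  imports "HOL-Analysis.Analysis"
begin

definition matA :: "real^2^2" where
  "matA = vector [vector [2, 1], vector [1, 1]]"

definition lam :: real where
  "lam = (GREATEST l. \<exists>v::real^2. v \<noteq> 0 \<and> matA *v v = l *\<^sub>R v)"

text \<open>Closed disc D_r = {(s1,s2). s1^2 + s2^2 \<le> r} (as in the paper, r bounds the squared norm).\<close>
definition D :: "real \<Rightarrow> (real \<times> real) set" where
  "D r = {(s1, s2). s1\<^sup>2 + s2\<^sup>2 \<le> r}"

definition smooth_on :: "(real \<Rightarrow> real) \<Rightarrow> real set \<Rightarrow> bool" where
  "smooth_on f S \<longleftrightarrow> (\<forall>n. \<forall>x\<in>S. ((deriv ^^ n) f) differentiable (at x))"

definition admissible_psi :: "real \<Rightarrow> real \<Rightarrow> (real \<Rightarrow> real) \<Rightarrow> bool" where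
  "admissible_psi \<alpha> r0 \<psi> \<longleftrightarrow>
     (\<forall>u\<in>{0..1}. \<psi> u \<in> {0..1}) \<and>
     smooth_on \<psi> {0<..<1} \<and>
     (\<forall>u\<in>{r0..1}. \<psi> u = 1) \<and>
     (\<forall>u\<in>{0<..<r0}. deriv \<psi> u > 0) \<and>
     (\<forall>u\<in>{0<..<r0}. \<forall>v\<in>{0<..<r0}. u \<le> v \<longrightarrow> deriv \<psi> v \<le> deriv \<psi> u) \<and>
     (\<forall>u\<in>{0..r0/2}. \<psi> u = (u / r0) powr \<alpha>)"

end

theory Submission
  imports Defs
begin

lemma matA_mult: "(matA *v w) $ 1 = 2 * w$1 + w$2" "(matA *v w) $ 2 = w$1 + w$2" for w :: "real^2"
  unfolding matA_def by (simp_all add: matrix_vector_mult_def sum_2)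

lemma eig_le: fixes v :: "real^2" assumes v: "v \<noteq> 0" "matA *v v = l *\<^sub>R v"
  shows "l \<le> (3 + sqrt 5)/2"
proof -
    have e1: "2 * v$1 + v$2 = l * v$1" and e2: "v$1 + v$2 = l * v$2"
      using v(2) by (simp_all add: vec_eq_iff forall_2 matA_mult)
    have nz: "v$1 \<noteq> 0 \<or> v$2 \<noteq> 0" using v(1) by (simp add: vec_eq_iff forall_2)
    have v2: "v$2 = (l-2) * v$1" using e1 by (simp add: algebra_simps)
    have "v$1 + (l-2) * v$1 = l * ((l-2) * v$1)" using e2 v2 by simp
    hence "v$1 * (l*l - 3*l + 1) = 0" by (simp add: algebra_simps)
    moreover have "v$1 \<noteq> 0" using nz v2 by auto
    ultimately have q: "l*l - 3*l + 1 = 0" by simp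
    show ?thesis
    proof (rule ccontr)
      assume "\<not> l \<le> (3 + sqrt 5)/2"
      hence h: "l - 3/2 > sqrt 5 / 2" by simp
      have s0: "sqrt 5 / 2 \<ge> 0" by simp
      have "(l - 3/2) * (l - 3/2) > (sqrt 5 / 2) * (sqrt 5 / 2)"
        using mult_strict_mono[OF h h _ s0] h s0 by linarith
      hence "(l - 3/2) * (l - 3/2) > 5/4" by simp
      thus False using q by (simp add: algebra_simps)
    qed
qed
lemma lam_eq: "lam = (3 + sqrt 5)/2"
proof -
  let ?l = "(3 + sqrt 5)/2"
  have ev: "\<exists>v::real^2. v \<noteq> 0 \<and> matA *v v = ?l *\<^sub>R v"
  proof (intro exI conjI)
    show "vector [1, ?l - 2] \<noteq> (0::real^2)"
    proof
      assume h: "vector [1, ?l - 2] = (0::real^2)"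
      have "(vector [1, ?l - 2] :: real^2) $ 1 = 1" by simp
      thus False using h by simp
    qed
    have "?l * (?l - 2) = ?l - 1" by (simp add: field_simps)
    then show "matA *v vector [1, ?l - 2] = ?l *\<^sub>R vector [1, ?l - 2]"
      by (simp add: vec_eq_iff forall_2 matA_mult)
  qed
  have le: "l \<le> ?l" if "\<exists>v::real^2. v \<noteq> 0 \<and> matA *v v = l *\<^sub>R v" for l
    using that eig_le by blast
  show ?thesis unfolding lam_def by (rule Greatest_equality) (use ev le in auto)
qed

lemma L_pos: "ln lam > 0"
proof -
  have s: "sqrt 5 \<ge> 0" by simp
  have "lam > 1" unfolding lam_eq by (simp add: field_simps) (use s in linarith)
  thus ?thesis by simp
qed

lemma psi_lower:
  assumes adm: "admissible_psi \<alpha> r0 \<psi>" and r0: "0 < r0" "r0 < 1" and a: "0 < \<alpha>"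
    and u: "r0/2 < u" "u \<le> r0"
  shows "(1/2) powr \<alpha> \<le> \<psi> u"
proof (cases "u = r0")
  case True
  hence "\<psi> u = 1" using adm r0 unfolding admissible_psi_def by auto
  moreover have "(1/2::real) powr \<alpha> \<le> 1" using a by (intro powr_le1) auto
  ultimately show ?thesis by simp
next
  case False
  hence ul: "u < r0" using u by simp
  have "\<psi> (r0/2) \<le> \<psi> u"
  proof (rule DERIV_nonneg_imp_nondecreasing[of "r0/2" u \<psi>])
    show "r0/2 \<le> u" using u by simp
    fix x assume x: "r0/2 \<le> x" "x \<le> u"
    hence x01: "x \<in> {0<..<1}" and x0r: "x \<in> {0<..<r0}" using r0 ul by auto
    have "((deriv ^^ 0) \<psi>) differentiable (at x)"
      using adm x01 unfolding admissible_psi_def smooth_on_def by blast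
    hence "\<psi> differentiable (at x)" by simp
    hence "DERIV \<psi> x :> deriv \<psi> x" by (simp add: DERIV_deriv_iff_real_differentiable)
    moreover have "deriv \<psi> x > 0" using adm x0r unfolding admissible_psi_def by blast
    ultimately show "\<exists>y. DERIV \<psi> x :> y \<and> 0 \<le> y" by (intro exI[of _ "deriv \<psi> x"]) simp
  qed
  moreover have "\<psi> (r0/2) = (1/2) powr \<alpha>"
  proof -
    have "\<psi> (r0/2) = (r0/2/r0) powr \<alpha>" using adm r0 unfolding admissible_psi_def by auto
    thus ?thesis using r0 by simp
  qed
  ultimately show ?thesis by simp
qed

theorem lemma5p6:
  fixes \<alpha> :: real
  assumes "0 < \<alpha>" "\<alpha> < 1"
  shows "\<exists>T0>0. \<forall>r0 \<psi> (I::real set) (s1::real \<Rightarrow> real) s2.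
    0 < r0 \<and> r0 < 1 \<and> admissible_psi \<alpha> r0 \<psi> \<and>
    is_interval I \<and> 0 \<in> I \<and>
    (\<forall>t\<in>I. (s1 t, s2 t) \<in> D 1) \<and>
    (\<forall>t\<in>I. (s1 has_real_derivative
        s1 t * \<psi> ((s1 t)\<^sup>2 + (s2 t)\<^sup>2) * ln lam) (at t within I)) \<and>
    (\<forall>t\<in>I. (s2 has_real_derivative
        - s2 t * \<psi> ((s1 t)\<^sup>2 + (s2 t)\<^sup>2) * ln lam) (at t within I)) \<and>
    (s1 0, s2 0) \<in> D r0
    \<longrightarrow> (\<forall>a b. {a<..<b} \<subseteq> I \<and>
               (\<forall>t\<in>{a<..<b}. (s1 t, s2 t) \<in> D r0 - D (r0 / 2))
               \<longrightarrow> b - a < T0)"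
proof -
  define L where "L = ln lam"
  define p where "p = (1/2::real) powr \<alpha>"
  define c where "c = p * L"
  have Lp: "L > 0" unfolding L_def using L_pos .
  have pp: "p > 0" unfolding p_def by simp
  have cp: "c > 0" unfolding c_def using Lp pp by simp
  show ?thesis
  proof (intro exI[of _ "8/c"] conjI allI impI)
    show "8/c > 0" using cp by simp
    fix r0 \<psi> I s1 s2 a b
    assume H: "0 < r0 \<and> r0 < 1 \<and> admissible_psi \<alpha> r0 \<psi> \<and>
    is_interval I \<and> 0 \<in> I \<and>
    (\<forall>t\<in>I. (s1 t, s2 t) \<in> D 1) \<and>
    (\<forall>t\<in>I. (s1 has_real_derivative
        s1 t * \<psi> ((s1 t)\<^sup>2 + (s2 t)\<^sup>2) * ln lam) (at t within I)) \<and>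
    (\<forall>t\<in>I. (s2 has_real_derivative
        - s2 t * \<psi> ((s1 t)\<^sup>2 + (s2 t)\<^sup>2) * ln lam) (at t within I)) \<and>
    (s1 0, s2 0) \<in> D r0"
    and H2: "{a<..<b} \<subseteq> I \<and> (\<forall>t\<in>{a<..<b}. (s1 t, s2 t) \<in> D r0 - D (r0 / 2))"
    from H have r0: "0 < r0" "r0 < 1" and adm: "admissible_psi \<alpha> r0 \<psi>" by auto
    from H2 have sub: "{a<..<b} \<subseteq> I" by simp
    have ann: "r0/2 < (s1 t)\<^sup>2 + (s2 t)\<^sup>2 \<and> (s1 t)\<^sup>2 + (s2 t)\<^sup>2 \<le> r0" if "t \<in> {a<..<b}" for t
    proof -
      have "(s1 t, s2 t) \<in> D r0 - D (r0/2)" using H2 that by blast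
      hence "(s1 t)\<^sup>2 + (s2 t)\<^sup>2 \<le> r0" "\<not> (s1 t)\<^sup>2 + (s2 t)\<^sup>2 \<le> r0/2"
        unfolding D_def by auto
      thus ?thesis by linarith
    qed
    define g where "g t = (s1 t)\<^sup>2 - (s2 t)\<^sup>2 - c * r0 * t" for t
    have gd: "\<exists>y. DERIV g t :> y \<and> 0 \<le> y" if t: "t \<in> {a<..<b}" for t
    proof -
      let ?u = "(s1 t)\<^sup>2 + (s2 t)\<^sup>2"
      have tI: "t \<in> I" using t sub by auto
      have d1: "(s1 has_real_derivative s1 t * \<psi> ?u * L) (at t)"
      proof -
        have "(s1 has_real_derivative s1 t * \<psi> ?u * L) (at t within I)" using H tI L_def by auto
        hence "(s1 has_real_derivative s1 t * \<psi> ?u * L) (at t within {a<..<b})"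
          using DERIV_subset sub by blast
        thus ?thesis using at_within_open[OF t open_greaterThanLessThan] by simp
      qed
      have d2: "(s2 has_real_derivative - s2 t * \<psi> ?u * L) (at t)"
      proof -
        have "(s2 has_real_derivative - s2 t * \<psi> ?u * L) (at t within I)" using H tI L_def by auto
        hence "(s2 has_real_derivative - s2 t * \<psi> ?u * L) (at t within {a<..<b})"
          using DERIV_subset sub by blast
        thus ?thesis using at_within_open[OF t open_greaterThanLessThan] by simp
      qed
      have dg: "DERIV g t :> (2 * s1 t * (s1 t * \<psi> ?u * L) - 2 * s2 t * (- s2 t * \<psi> ?u * L) - c * r0)"
        unfolding g_def[abs_def]
        by (auto intro!: derivative_eq_intros d1 d2 simp: power2_eq_square)
      have eq: "2 * s1 t * (s1 t * \<psi> ?u * L) - 2 * s2 t * (- s2 t * \<psi> ?u * L) - c * r0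
          = 2 * L * (\<psi> ?u * ?u) - 2 * L * (p * (r0/2))"
        unfolding c_def by (simp add: algebra_simps power2_eq_square)
      have pl: "p \<le> \<psi> ?u" using psi_lower[OF adm r0 assms(1)] ann[OF t] unfolding p_def by blast
      have "p * (r0/2) \<le> \<psi> ?u * ?u"
        using pl ann[OF t] pp r0 by (intro mult_mono) auto
      hence "0 \<le> 2 * L * (\<psi> ?u * ?u) - 2 * L * (p * (r0/2))" using Lp by simp
      thus ?thesis using dg eq by auto
    qed
    show "b - a < 8/c"
    proof (rule ccontr)
      assume "\<not> b - a < 8/c"
      hence ba: "b - a \<ge> 8/c" by simp
      hence bpos: "b - a > 0" using cp by (smt (verit) divide_pos_pos)
      define x where "x = a + (b-a)/4"
      define y where "y = b - (b-a)/4"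
      have x: "x \<in> {a<..<b}" and y: "y \<in> {a<..<b}" using bpos unfolding x_def y_def by (auto simp: field_simps)
      have "g x \<le> g y"
      proof (rule DERIV_nonneg_imp_nondecreasing[of x y g])
        show "x \<le> y" using bpos unfolding x_def y_def by (simp add: field_simps)
        fix z assume "x \<le> z" "z \<le> y"
        hence "z \<in> {a<..<b}" using x y by auto
        thus "\<exists>w. DERIV g z :> w \<and> 0 \<le> w" by (rule gd)
      qed
      hence "c * r0 * (y - x) \<le> ((s1 y)\<^sup>2 - (s2 y)\<^sup>2) - ((s1 x)\<^sup>2 - (s2 x)\<^sup>2)"
        unfolding g_def by (simp add: algebra_simps)
      also have "\<dots> \<le> 2 * r0" using ann[OF x] ann[OF y]
        by (smt (verit) zero_le_power2)
      finally have f: "c * r0 * (y - x) \<le> 2 * r0" .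
      have "y - x = (b-a)/2" unfolding x_def y_def by (simp add: field_simps)
      with f have "(c * ((b-a)/2)) * r0 \<le> 2 * r0" by (simp add: algebra_simps)
      hence "c * ((b-a)/2) \<le> 2" using r0 mult_right_le_imp_le by blast
      hence "c * (b - a) \<le> 4" by (simp add: field_simps)
      moreover have "c * (b - a) \<ge> 8" using ba cp by (simp add: field_simps)
      ultimately show False by simp
    qed
  qed
qed

end
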